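(* Let $p\ge1$ and let $x_0,x_1,\dots,x_p,y_1,\dots,y_p\in\mathbb{C}$ be pairwise distinct and all different from $1$. For $n,k\in\{0,1,\dots,p\}$ define $$B_{n,k}=\prod_{i=1}^{p}\frac{1-x_i}{1-y_i}+\sum_{j=1}^{p}\frac{(1-x_n)(1-x_k)(x_0-y_j)(y_j-x_j)}{(1-y_j)(1-x_0)(y_j-x_n)(y_j-x_k)}\prod_{\substack{i=1\\ i\ne j}}^{p}\frac{x_i-y_j}{y_i-y_j}.$$ Then $$B_{n,k}=\delta_{n,k}\,\frac{(x_k-1)\prod_{i=0,\,i\ne k}^{p}(x_k-x_i)}{(x_0-1)\prod_{i=1}^{p}(x_k-y_i)},$$ where $\delta_{n,k}$ is the Kronecker delta. *)

theory Defs
  imports Complex_Main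
begin

end

theory Submission
  imports Defs "HOL-Computational_Algebra.Polynomial"
begin


lemma lin_prod_deg:
  fixes B :: "'a::field set"
  assumes "finite B"
  shows "degree (\<Prod>b\<in>B. [:-b,1:]) = card B" "coeff (\<Prod>b\<in>B. [:-b,1:]) (card B) = 1"
proof -
  have d: "degree (\<Prod>b\<in>B. [:-b,1:]) = card B"
    by (subst degree_prod_eq_sum_degree) (auto simp: assms)
  show "degree (\<Prod>b\<in>B. [:-b,1:]) = card B" by (rule d)
  have "lead_coeff (\<Prod>b\<in>B. [:-b,1:]) = 1" by (simp add: lead_coeff_prod)
  thus "coeff (\<Prod>b\<in>B. [:-b,1:]) (card B) = 1" using d by simp
qed

lemma divdiff_zero:
  fixes A :: "'a::field set" and N :: "'a poly"
  assumes fin: "finite A" and deg: "degree N + 2 \<le> card A"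
  shows "(\<Sum>a\<in>A. poly N a / (\<Prod>b\<in>A-{a}. a - b)) = 0"
proof -
  define c where "c a = poly N a / (\<Prod>b\<in>A-{a}. a - b)" for a
  define L where "L = (\<Sum>a\<in>A. smult (c a) (\<Prod>b\<in>A-{a}. [:-b,1:]))"
  have cardm: "card (A - {a}) = card A - 1" if "a \<in> A" for a
    using that fin by simp
  have degL: "degree L \<le> card A - 1"
    unfolding L_def
    apply (rule degree_sum_le[OF fin])
    using lin_prod_deg(1)[of "A - {_}"] fin cardm
    by (metis (no_types, lifting) degree_smult_le finite_Diff order_trans order.refl)
  have polyL: "poly L z = poly N z" if z: "z \<in> A" for z
  proof -
    have "poly L z = (\<Sum>a\<in>A. c a * (\<Prod>b\<in>A-{a}. z - b))"
      unfolding L_def by (simp add: poly_sum poly_prod)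
    also have "\<dots> = c z * (\<Prod>b\<in>A-{z}. z - b)"
    proof -
      have "(\<Sum>a\<in>A-{z}. c a * (\<Prod>b\<in>A-{a}. z - b)) = 0"
      proof (intro sum.neutral ballI)
        fix a assume a: "a \<in> A - {z}"
        have "(\<Prod>b\<in>A-{a}. z - b) = 0"
          by (rule prod_zero) (use fin a z in auto)
        thus "c a * (\<Prod>b\<in>A-{a}. z - b) = 0" by simp
      qed
      thus ?thesis using sum.remove[OF fin z, of "\<lambda>a. c a * (\<Prod>b\<in>A-{a}. z - b)"] by simp
    qed
    also have "\<dots> = poly N z"
      unfolding c_def using fin by (auto simp: prod_zero_iff)
    finally show ?thesis .
  qed
  have "L = N"
  proof (rule poly_eqI_degree[of A])
    show "card A > degree L" using degL deg by linarith
    show "card A > degree N" using deg by linarith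
  qed (rule polyL)
  hence "coeff L (card A - 1) = 0"
    using deg by (auto intro: coeff_eq_0)
  moreover have "coeff L (card A - 1) = (\<Sum>a\<in>A. c a)"
    unfolding L_def coeff_sum
  proof (intro sum.cong refl)
    fix a assume a: "a \<in> A"
    have "coeff (\<Prod>b\<in>A-{a}. [:-b,1:]) (card (A - {a})) = 1"
      by (rule lin_prod_deg(2)) (use fin in simp)
    hence "coeff (\<Prod>b\<in>A-{a}. [:-b,1:]) (card A - 1) = 1"
      by (simp only: cardm[OF a])
    thus "coeff (smult (c a) (\<Prod>b\<in>A-{a}. [:-b,1:])) (card A - 1) = c a"
      by (simp only: coeff_smult mult_1_right)
  qed
  ultimately show ?thesis unfolding c_def by simp
qed


lemma S_insert:
  fixes A :: "'a::field set"
  assumes "finite A" "a \<notin> A"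
  shows "(\<Sum>c\<in>insert a A. g c / (\<Prod>b\<in>insert a A - {c}. c - b))
       = g a / (\<Prod>b\<in>A. a - b) + (\<Sum>c\<in>A. (g c / (c - a)) / (\<Prod>b\<in>A - {c}. c - b))"
proof -
  have "(\<Sum>c\<in>insert a A. g c / (\<Prod>b\<in>insert a A - {c}. c - b))
     = g a / (\<Prod>b\<in>insert a A - {a}. a - b) + (\<Sum>c\<in>A. g c / (\<Prod>b\<in>insert a A - {c}. c - b))"
    using assms by (simp add: sum.insert)
  also have "insert a A - {a} = A" using assms by auto
  also have "(\<Sum>c\<in>A. g c / (\<Prod>b\<in>insert a A - {c}. c - b)) = (\<Sum>c\<in>A. (g c / (c - a)) / (\<Prod>b\<in>A - {c}. c - b))"
  proof (rule sum.cong[OF refl])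
    fix c assume c: "c \<in> A"
    have "insert a A - {c} = insert a (A - {c})" using c assms by auto
    hence "(\<Prod>b\<in>insert a A - {c}. c - b) = (c - a) * (\<Prod>b\<in>A - {c}. c - b)"
      using assms by (simp add: prod.insert)
    thus "g c / (\<Prod>b\<in>insert a A - {c}. c - b) = (g c / (c - a)) / (\<Prod>b\<in>A - {c}. c - b)"
      by (simp add: divide_divide_eq_left)
  qed
  finally show ?thesis .
qed

lemma S_image:
  fixes y :: "nat \<Rightarrow> 'a::field"
  assumes "inj_on y I"
  shows "(\<Sum>c\<in>y ` I. h c / (\<Prod>b\<in>y ` I - {c}. c - b)) = (\<Sum>j\<in>I. h (y j) / (\<Prod>i\<in>I - {j}. y j - y i))"
proof -
  have "(\<Sum>c\<in>y ` I. h c / (\<Prod>b\<in>y ` I - {c}. c - b)) = (\<Sum>j\<in>I. h (y j) / (\<Prod>b\<in>y ` I - {y j}. y j - b))"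
    using assms by (simp add: sum.reindex)
  also have "\<dots> = (\<Sum>j\<in>I. h (y j) / (\<Prod>i\<in>I - {j}. y j - y i))"
  proof (rule sum.cong[OF refl])
    fix j assume j: "j \<in> I"
    have "y ` I - {y j} = y ` (I - {j})" using assms j by (auto simp: inj_on_def)
    moreover have "inj_on y (I - {j})" using assms by (rule inj_on_subset) auto
    ultimately show "h (y j) / (\<Prod>b\<in>y ` I - {y j}. y j - b) = h (y j) / (\<Prod>i\<in>I - {j}. y j - y i)"
      by (simp add: prod.reindex)
  qed
  finally show ?thesis .
qed

lemma prod_neg_swap:
  fixes a b :: "nat \<Rightarrow> 'a::comm_ring_1"
  shows "(\<Prod>i\<in>I. a i - b i) = (-1) ^ card I * (\<Prod>i\<in>I. b i - a i)"
proof -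
  have "(\<Prod>i\<in>I. a i - b i) = (\<Prod>i\<in>I. (-1) * (b i - a i))" by (intro prod.cong) auto
  also have "\<dots> = (\<Prod>i\<in>I. (-1::'a)) * (\<Prod>i\<in>I. b i - a i)" by (rule prod.distrib)
  also have "(\<Prod>i\<in>I. (-1::'a)) = (-1) ^ card I" by (rule prod_constant)
  finally show ?thesis .
qed


lemma absA:
  fixes a b c D N Y q :: complex
  assumes "D\<noteq>0" "N\<noteq>0" "b\<noteq>0" "c\<noteq>0" "Y\<noteq>0"
  shows "a*(-D)/(b*c*N) * (N*q/(D*Y)) = a/c*((q/(-b))/Y)"
  using assms by (simp add: field_simps)

lemma termA:
  fixes xn xk x0 xj yj X Y Y' q s :: complex
  assumes hX: "X*(x0-yj)*(xj-yj) = (xn-yj)*(xk-yj)*(s*q)" and hY: "Y = s*Y'" and hs: "s*s=1"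
    and nz: "1-yj\<noteq>0" "1-x0\<noteq>0" "yj-xn\<noteq>0" "yj-xk\<noteq>0" "Y'\<noteq>0" "x0-yj\<noteq>0" "xj-yj\<noteq>0"
  shows "(1-xn)*(1-xk)*(x0-yj)*(yj-xj)/((1-yj)*(1-x0)*(yj-xn)*(yj-xk)) * (X/Y) = (1-xn)*(1-xk)/(1-x0) * ((q/(yj-1))/Y')"
proof -
  have s0: "s \<noteq> 0" using hs by auto
  have X: "X = (xn-yj)*(xk-yj)*(s*q)/((x0-yj)*(xj-yj))" using hX nz by (subst eq_divide_eq) (auto simp: mult.assoc)
  have XY: "X/Y = (yj-xn)*(yj-xk)*q/((x0-yj)*(xj-yj)*Y')"
  proof -
    have "X/Y = ((xn-yj)*(xk-yj)*(s*q))/(((x0-yj)*(xj-yj))*(s*Y'))"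
      unfolding X hY by (simp add: divide_divide_eq_left)
    also have "\<dots> = (s*((xn-yj)*(xk-yj)*q))/(s*((x0-yj)*(xj-yj)*Y'))"
      by (simp only: mult_ac)
    also have "\<dots> = ((xn-yj)*(xk-yj)*q)/((x0-yj)*(xj-yj)*Y')"
      using s0 by (rule mult_divide_mult_cancel_left)
    also have "(xn-yj)*(xk-yj) = (yj-xn)*(yj-xk)" by (simp add: algebra_simps)
    finally show ?thesis .
  qed
  have n1: "yj - 1 \<noteq> 0" using nz by (metis eq_iff_diff_eq_0)
  have e1: "(1-xn)*(1-xk)*(x0-yj)*(yj-xj) = ((1-xn)*(1-xk))*(-((x0-yj)*(xj-yj)))" by (simp add: algebra_simps)
  have e2: "yj - 1 = - (1 - yj)" by simp
  have e3: "(1-yj)*(1-x0)*(yj-xn)*(yj-xk) = (1-yj)*(1-x0)*((yj-xn)*(yj-xk))" by (simp only: mult.assoc)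
  show ?thesis unfolding XY e1 e2 e3
    by (rule absA) (use nz in auto)
qed
lemma absB:
  fixes a b c D N Y q :: complex
  assumes "D\<noteq>0" "N\<noteq>0" "b\<noteq>0" "c\<noteq>0" "Y\<noteq>0"
  shows "a*(-D)/(b*c*N*N) * (N*q/(D*Y)) = a/c*(((q/N)/(-b))/Y)"
  using assms by (simp add: field_simps)

lemma termB:
  fixes xk x0 xj yj X Y Y' q s :: complex
  assumes hX: "X*(x0-yj)*(xj-yj) = (xk-yj)*(-(s*q))" and hY: "Y = s*Y'" and hs: "s*s=1"
    and nz: "1-yj\<noteq>0" "1-x0\<noteq>0" "yj-xk\<noteq>0" "Y'\<noteq>0" "x0-yj\<noteq>0" "xj-yj\<noteq>0"
  shows "(1-xk)*(1-xk)*(x0-yj)*(yj-xj)/((1-yj)*(1-x0)*(yj-xk)*(yj-xk)) * (X/Y) = (1-xk)*(1-xk)/(1-x0) * (((q/(yj-xk))/(yj-1))/Y')"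
proof -
  have s0: "s \<noteq> 0" using hs by auto
  have X: "X = (xk-yj)*(-(s*q))/((x0-yj)*(xj-yj))" using hX nz by (subst eq_divide_eq) (auto simp: mult.assoc)
  have XY: "X/Y = (yj-xk)*q/((x0-yj)*(xj-yj)*Y')"
  proof -
    have "X/Y = ((yj-xk)*(s*q))/(((x0-yj)*(xj-yj))*(s*Y'))"
      unfolding X hY by (simp add: divide_divide_eq_left algebra_simps)
    also have "\<dots> = (s*((yj-xk)*q))/(s*((x0-yj)*(xj-yj)*Y'))"
      by (simp only: mult_ac)
    also have "\<dots> = ((yj-xk)*q)/((x0-yj)*(xj-yj)*Y')"
      using s0 by (rule mult_divide_mult_cancel_left)
    finally show ?thesis .
  qed
  have e1: "(1-xk)*(1-xk)*(x0-yj)*(yj-xj) = ((1-xk)*(1-xk))*(-((x0-yj)*(xj-yj)))" by (simp add: algebra_simps)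
  have e2: "yj - 1 = - (1 - yj)" by simp
  show ?thesis unfolding XY e1 e2
    by (rule absB) (use nz in auto)
qed

lemma prod_two:
  assumes "finite S" "n \<in> S" "k \<in> S" "n \<noteq> k"
  shows "prod f S = f n * f k * prod f (S - {n,k})"
proof -
  have "prod f S = f n * prod f (S - {n})" using assms by (simp add: prod.remove)
  also have "prod f (S - {n}) = f k * prod f (S - {n} - {k})" using assms by (simp add: prod.remove)
  also have "S - {n} - {k} = S - {n,k}" by auto
  finally show ?thesis by (simp add: mult.assoc)
qed

lemma finalC:
  fixes xk x0 P q :: complex
  assumes "xk - 1 \<noteq> 0" "x0 - 1 \<noteq> 0" "P \<noteq> 0"
  shows "(1-xk)*(1-xk)/(1-x0) * (- (q/((xk-1)*P))) = ((xk-1)*q)/((x0-1)*P)"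
proof -
  have e: "1 - x0 = -(x0-1)" "1 - xk = -(xk - 1)" by simp_all
  have g: "(-a)*(-a)/(-b) * (- (q/(a*P))) = (a*q)/(b*P)" if "a \<noteq> 0" "b \<noteq> 0" for a b :: complex
    using that assms(3) by (simp add: field_simps)
  show ?thesis unfolding e by (rule g) (use assms in auto)
qed

theorem lemma4:
  fixes p :: nat and x y :: "nat \<Rightarrow> complex" and n k :: nat
  assumes "p \<ge> 1"
    and "inj_on x {0..p}" and "inj_on y {1..p}"
    and "x ` {0..p} \<inter> y ` {1..p} = {}"
    and "\<forall>i\<in>{0..p}. x i \<noteq> 1" and "\<forall>i\<in>{1..p}. y i \<noteq> 1"
    and "n \<le> p" and "k \<le> p"
  shows "(\<Prod>i=1..p. (1 - x i) / (1 - y i))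
       + (\<Sum>j=1..p. ((1 - x n) * (1 - x k) * (x 0 - y j) * (y j - x j))
             / ((1 - y j) * (1 - x 0) * (y j - x n) * (y j - x k))
             * (\<Prod>i\<in>{1..p} - {j}. (x i - y j) / (y i - y j)))
     = (if n = k then ((x k - 1) * (\<Prod>i\<in>{0..p} - {k}. (x k - x i)))
                      / ((x 0 - 1) * (\<Prod>i=1..p. (x k - y i)))
        else 0)"
proof -
  define Ys where "Ys = y ` {1..p}"
  have finYs: "finite Ys" unfolding Ys_def by simp
  have one_notin: "1 \<notin> Ys" unfolding Ys_def using assms(6) by auto
  have xy: "x i \<noteq> y j" if "i \<le> p" "j \<in> {1..p}" for i j
  proof
    assume e: "x i = y j"
    have "x i \<in> x ` {0..p}" using that(1) by simp
    moreover have "x i \<in> y ` {1..p}" using that(2) e by simp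
    ultimately show False using assms(4) by blast
  qed
  have xnotin: "x i \<notin> Ys" if "i \<le> p" for i using xy that unfolding Ys_def by auto
  have cardYs: "card Ys = p" unfolding Ys_def using card_image[OF assms(3)] by simp
  have y1: "y j \<noteq> 1" if "j \<in> {1..p}" for j using assms(6) that by auto
  have x1: "x i \<noteq> 1" if "i \<le> p" for i using assms(5) that by auto
  have yy: "y i \<noteq> y j" if "i \<in> {1..p}" "j \<in> {1..p}" "i \<noteq> j" for i j
    using inj_on_contraD[OF assms(3) that(3,1,2)] .
  have xx: "x i \<noteq> x j" if "i \<le> p" "j \<le> p" "i \<noteq> j" for i j
    using inj_on_contraD[OF assms(2) that(3)] that(1,2) by simp
  have Yprod: "(\<Prod>b\<in>Ys. a - b) = (\<Prod>i=1..p. a - y i)" for a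
    unfolding Ys_def using assms(3) by (simp add: prod.reindex)
  have first: "(\<Prod>i=1..p. (1-x i)/(1-y i)) = (\<Prod>i=1..p. 1-x i)/(\<Prod>i=1..p. 1 - y i)"
    by (rule prod_dividef)
  have set0: "{0..p} = insert 0 {1..p}" by auto
  have px: "(\<Prod>i=0..p. 1 - x i) = (1 - x 0) * (\<Prod>i=1..p. 1 - x i)"
    unfolding set0 by (simp add: prod.insert)
  have setj: "{0..p} = insert 0 (insert j ({1..p} - {j}))" if "j \<in> {1..p}" for j
    using that by auto
  have pxj: "(\<Prod>i\<in>{1..p}-{j}. x i - y j) * (x 0 - y j) * (x j - y j) = (\<Prod>i=0..p. x i - y j)"
    if j: "j \<in> {1..p}" for j
  proof -
    have a: "(\<Prod>i=0..p. x i - y j) = (x 0 - y j) * (\<Prod>i=1..p. x i - y j)"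
      unfolding set0 by (simp add: prod.insert)
    have b: "(\<Prod>i=1..p. x i - y j) = (x j - y j) * (\<Prod>i\<in>{1..p}-{j}. x i - y j)"
      by (rule prod.remove) (use j in simp_all)
    show ?thesis unfolding a b by (simp only: mult_ac)
  qed
  have pdiv: "(\<Prod>i\<in>{1..p} - {j}. (x i - y j) / (y i - y j))
       = (\<Prod>i\<in>{1..p} - {j}. x i - y j) / (\<Prod>i\<in>{1..p} - {j}. y i - y j)" for j
    by (rule prod_dividef)
  have Ysign: "(\<Prod>i\<in>{1..p} - {j}. y i - y j) = (-1)^(p-1) * (\<Prod>i\<in>{1..p} - {j}. y j - y i)"
    if j: "j \<in> {1..p}" for j
  proof -
    have "card ({1..p} - {j}) = p - 1" using j by simp
    thus ?thesis using prod_neg_swap[of y "\<lambda>_. y j" "{1..p} - {j}"] by simp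
  qed
  have Ynz: "(\<Prod>i\<in>{1..p} - {j}. y j - y i) \<noteq> 0" if j: "j \<in> {1..p}" for j
    using yy j by (auto simp: prod_zero_iff)
  have ss: "(-1::complex)^(p-1) * (-1)^(p-1) = 1" by (simp flip: power_add)
  have Pnz: "(\<Prod>i=1..p. 1 - y i) \<noteq> 0" using y1 by (auto simp: prod_zero_iff)
  show ?thesis
  proof (cases "n = k")
    case False
    define I where "I = {0..p} - {n,k}"
    define Q where "Q = (\<Prod>i\<in>I. [:-x i,1:])"
    have polyQ: "poly Q z = (\<Prod>i\<in>I. z - x i)" for z
      unfolding Q_def by (simp add: poly_prod)
    have cardI: "card I = p - 1" unfolding I_def using False assms(7,8) by (simp add: card_Diff_subset)
    have degQ: "degree Q = p - 1" unfolding Q_def using lin_prod_deg(1)[of "x ` I"] cardI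
      by (subst degree_prod_eq_sum_degree) (auto simp: I_def)
    have key: "(\<Sum>c\<in>insert 1 Ys. poly Q c / (\<Prod>b\<in>insert 1 Ys - {c}. c - b)) = 0"
      by (rule divdiff_zero) (use finYs one_notin cardYs degQ assms(1) in auto)
    hence key2: "poly Q 1/(\<Prod>i=1..p. 1 - y i) + (\<Sum>j=1..p. (poly Q (y j)/(y j - 1))/(\<Prod>i\<in>{1..p}-{j}. y j - y i)) = 0"
      unfolding S_insert[OF finYs one_notin] Yprod unfolding Ys_def S_image[OF assms(3)] .
    define C where "C = (1-x n)*(1-x k)/(1-x 0)"
    have t1: "(\<Prod>i=1..p. (1-x i)/(1-y i)) = C * (poly Q 1/(\<Prod>i=1..p. 1-y i))"
    proof -
      have "(\<Prod>i=0..p. 1 - x i) = (1 - x n) * (1 - x k) * poly Q 1"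
        unfolding polyQ I_def using prod_two[of "{0..p}" n k] False assms(7,8) by simp
      hence "(\<Prod>i=1..p. 1 - x i) = (1 - x n) * (1 - x k) * poly Q 1 / (1 - x 0)"
        using px x1[of 0] by (simp add: field_simps)
      thus ?thesis unfolding first C_def by simp
    qed
    have t2: "((1 - x n) * (1 - x k) * (x 0 - y j) * (y j - x j))
             / ((1 - y j) * (1 - x 0) * (y j - x n) * (y j - x k))
             * (\<Prod>i\<in>{1..p} - {j}. (x i - y j) / (y i - y j))
          = C * ((poly Q (y j)/(y j - 1))/(\<Prod>i\<in>{1..p}-{j}. y j - y i))"
      if j: "j \<in> {1..p}" for j
      unfolding pdiv C_def
    proof (rule termA[where s = "(-1)^(p-1)"])
      have "(\<Prod>i=0..p. x i - y j) = (x n - y j) * (x k - y j) * (\<Prod>i\<in>I. x i - y j)"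
        unfolding I_def using prod_two[of "{0..p}" n k] False assms(7,8) by simp
      also have "(\<Prod>i\<in>I. x i - y j) = (-1)^(p-1) * poly Q (y j)"
        unfolding polyQ using prod_neg_swap[of x "\<lambda>_. y j" I] cardI by simp
      finally show "(\<Prod>i\<in>{1..p}-{j}. x i - y j) * (x 0 - y j) * (x j - y j)
          = (x n - y j) * (x k - y j) * ((-1)^(p-1) * poly Q (y j))"
        using pxj[OF j] by simp
      show "(\<Prod>i\<in>{1..p} - {j}. y i - y j) = (-1)^(p-1) * (\<Prod>i\<in>{1..p} - {j}. y j - y i)"
        by (rule Ysign[OF j])
    qed (use ss y1[OF j] x1[of 0] xy[of n j] xy[of k j] xy[of 0 j] xy[of j j] j assms(7,8) Ynz[OF j] in auto)
    have "(\<Prod>i=1..p. (1 - x i) / (1 - y i))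
       + (\<Sum>j=1..p. ((1 - x n) * (1 - x k) * (x 0 - y j) * (y j - x j))
             / ((1 - y j) * (1 - x 0) * (y j - x n) * (y j - x k))
             * (\<Prod>i\<in>{1..p} - {j}. (x i - y j) / (y i - y j)))
       = C * (poly Q 1/(\<Prod>i=1..p. 1 - y i) + (\<Sum>j=1..p. (poly Q (y j)/(y j - 1))/(\<Prod>i\<in>{1..p}-{j}. y j - y i)))"
      unfolding t1 distrib_left sum_distrib_left using t2 by simp
    also have "\<dots> = 0" using key2 by simp
    finally show ?thesis using False by simp
  next
    case True
    define I where "I = {0..p} - {k}"
    define Q where "Q = (\<Prod>i\<in>I. [:-x i,1:])"
    have polyQ: "poly Q z = (\<Prod>i\<in>I. z - x i)" for z
      unfolding Q_def by (simp add: poly_prod)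
    have cardI: "card I = p" unfolding I_def using assms(8) by simp
    have degQ: "degree Q = p" unfolding Q_def using cardI
      by (subst degree_prod_eq_sum_degree) (auto simp: I_def)
    have xk1: "x k \<notin> insert 1 Ys" using xnotin[OF assms(8)] x1[OF assms(8)] by auto
    have key: "(\<Sum>c\<in>insert (x k) (insert 1 Ys). poly Q c / (\<Prod>b\<in>insert (x k) (insert 1 Ys) - {c}. c - b)) = 0"
      by (rule divdiff_zero) (use finYs one_notin cardYs degQ xk1 in auto)
    have pk: "(\<Prod>b\<in>insert 1 Ys. x k - b) = (x k - 1) * (\<Prod>i=1..p. x k - y i)"
      using finYs one_notin Yprod by (simp add: prod.insert)
    have key2: "poly Q (x k)/((x k - 1) * (\<Prod>i=1..p. x k - y i)) +
       ((poly Q 1/(1 - x k))/(\<Prod>i=1..p. 1 - y i) + (\<Sum>j=1..p. ((poly Q (y j)/(y j - x k))/(y j - 1))/(\<Prod>i\<in>{1..p}-{j}. y j - y i))) = 0" (is "?A + ?R = 0")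
      using key unfolding S_insert[OF finite.insertI[OF finYs] xk1] S_insert[OF finYs one_notin] Yprod pk
      unfolding Ys_def S_image[OF assms(3)] .
    define C where "C = (1-x k)*(1-x k)/(1-x 0)"
    have xk1': "1 - x k \<noteq> 0" using x1[OF assms(8)] by simp
    have t1: "(\<Prod>i=1..p. (1-x i)/(1-y i)) = C * ((poly Q 1/(1 - x k))/(\<Prod>i=1..p. 1-y i))"
    proof -
      have "(\<Prod>i=0..p. 1 - x i) = (1 - x k) * poly Q 1"
        unfolding polyQ I_def using assms(8) by (simp add: prod.remove)
      hence "(\<Prod>i=1..p. 1 - x i) = (1 - x k) * poly Q 1 / (1 - x 0)"
        using px x1[of 0] by (simp add: field_simps)
      moreover have g: "a*q/c/P = a*a/c*((q/a)/P)" if "a \<noteq> 0" "c \<noteq> 0" "P \<noteq> 0" for a c P q :: complex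
        using that by (simp add: field_simps)
      ultimately show ?thesis unfolding first C_def using xk1' x1[of 0] Pnz by (simp add: g)
    qed
    have t2: "((1 - x k) * (1 - x k) * (x 0 - y j) * (y j - x j))
             / ((1 - y j) * (1 - x 0) * (y j - x k) * (y j - x k))
             * (\<Prod>i\<in>{1..p} - {j}. (x i - y j) / (y i - y j))
          = C * (((poly Q (y j)/(y j - x k))/(y j - 1))/(\<Prod>i\<in>{1..p}-{j}. y j - y i))"
      if j: "j \<in> {1..p}" for j
      unfolding pdiv C_def
    proof (rule termB[where s = "(-1)^(p-1)"])
      have "(\<Prod>i=0..p. x i - y j) = (x k - y j) * (\<Prod>i\<in>I. x i - y j)"
        unfolding I_def using assms(8) by (simp add: prod.remove)
      also have "(\<Prod>i\<in>I. x i - y j) = (-1)^p * poly Q (y j)"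
        unfolding polyQ using prod_neg_swap[of x "\<lambda>_. y j" I] cardI by simp
      also have "(-1::complex)^p = - ((-1)^(p-1))"
        using assms(1) by (cases p) auto
      finally show "(\<Prod>i\<in>{1..p}-{j}. x i - y j) * (x 0 - y j) * (x j - y j)
          = (x k - y j) * (- ((-1)^(p-1) * poly Q (y j)))"
        using pxj[OF j] by simp
      show "(\<Prod>i\<in>{1..p} - {j}. y i - y j) = (-1)^(p-1) * (\<Prod>i\<in>{1..p} - {j}. y j - y i)"
        by (rule Ysign[OF j])
    qed (use ss y1[OF j] x1[of 0] xy[of k j] xy[of 0 j] xy[of j j] j assms(8) Ynz[OF j] in auto)
    have "(\<Prod>i=1..p. (1 - x i) / (1 - y i))
       + (\<Sum>j=1..p. ((1 - x n) * (1 - x k) * (x 0 - y j) * (y j - x j))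
             / ((1 - y j) * (1 - x 0) * (y j - x n) * (y j - x k))
             * (\<Prod>i\<in>{1..p} - {j}. (x i - y j) / (y i - y j)))
       = C * ((poly Q 1/(1 - x k))/(\<Prod>i=1..p. 1 - y i) + (\<Sum>j=1..p. ((poly Q (y j)/(y j - x k))/(y j - 1))/(\<Prod>i\<in>{1..p}-{j}. y j - y i)))"
      unfolding True t1 distrib_left sum_distrib_left using t2 by simp
    also have "\<dots> = C * (- (poly Q (x k)/((x k - 1) * (\<Prod>i=1..p. x k - y i))))"
    proof -
      have "?R = - ?A" unfolding eq_neg_iff_add_eq_0 using key2 by (simp only: add.commute)
      thus ?thesis by (rule arg_cong)
    qed
    also have "\<dots> = ((x k - 1) * poly Q (x k)) / ((x 0 - 1) * (\<Prod>i=1..p. x k - y i))"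
      unfolding C_def
    proof (rule finalC)
      show "x k - 1 \<noteq> 0" "x 0 - 1 \<noteq> 0" using x1[OF assms(8)] x1[of 0] by auto
      show "(\<Prod>i=1..p. x k - y i) \<noteq> 0" using xy[OF assms(8)] by (auto simp: prod_zero_iff)
    qed
    also have "poly Q (x k) = (\<Prod>i\<in>{0..p} - {k}. x k - x i)" unfolding polyQ I_def ..
    finally show ?thesis using True by simp
  qed
qed

end
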